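(* Let $X$ be a compact Hausdorff space, $T:X\to X$ a covering map, and $\widetilde{\psi}$ the faithful representation of $C(X)\rtimes_{\alpha,\mathcal{L}}\mathbb{N}$ on $\widetilde{H}$ with $\widetilde{\psi}(f)=\widetilde{M}_f$, $\widetilde{\psi}(s)=\widetilde{S}$. Then for every $b\in C(X)\rtimes_{\alpha,\mathcal{L}}\mathbb{N}$: (1) $\langle\widetilde{\psi}(b)e_{(x,n)},e_{(x,n)}\rangle=G(b)(x)$ for all $(x,n)\in X\times\mathbb{Z}$; (2) $b\in C(X)$ if and only if $\langle\widetilde{\psi}(b)e_{(x,m)},e_{(y,n)}\rangle=0$ for all $(x,m),(y,n)\in X\times\mathbb{Z}$ with $(x,m)\neq(y,n)$; (3) if $(x,m),(y,n)\in X\times\mathbb{Z}$ and $\langle\widetilde{\psi}(b)e_{(x,m)},e_{(y,n)}\rangle\neq0$, then there exist $k,l\in\mathbb{N}$ with $k+m=l+n$ and $T^l(x)=T^k(y)$, and there exist an open neighbourhood $U$ of $x$ and an open neighbourhood $V$ of $y$ such that whenever $x'\in U$, $y'\in V$ and $T^l(x')=T^k(y')$, one has $\langle\widetilde{\psi}(b)e_{(x',m)},e_{(y',n)}\rangle\neq0$.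
   Context: $T:X\to X$ is a covering map: continuous, surjective, and every point has an open neighbourhood $V$ with $T^{-1}(V)$ a disjoint union of open sets each mapped homeomorphically onto $V$ by $T$. Define $\alpha(f)=f\circ T$, $L_0(f)(x)=\sum_{y\in T^{-1}(\{x\})}f(y)$, $\mathcal{L}(f)=L_0(1_X)^{-1}L_0(f)$ on $C(X)$; put $\mathrm{ind}(E)=\alpha(L_0(1_X))$ and $I_k=\mathrm{ind}(E)\,\alpha(\mathrm{ind}(E))\cdots\alpha^{k-1}(\mathrm{ind}(E))$ for $k\ge1$, $I_0=1$. Choose a finite open cover $\{V_i\}_{i=1}^t$ of $X$ with $T|_{V_i}$ injective, a subordinate partition of unity $\{v_i\}$, and $u_i=(\alpha(L_0(1_X))v_i)^{1/2}$. $C(X)\rtimes_{\alpha,\mathcal{L}}\mathbb{N}$ is the universal $C^*$-algebra generated by a unital copy of $C(X)$ and an isometry $s$ subject to $sf=\alpha(f)s$, $s^*fs=\mathcal{L}(f)$ ($f\in C(X)$), and $1=\sum_{i=1}^t u_iss^*u_i$; $C(X)$ is identified with its canonical image. $G: C(X)\rtimes_{\alpha,\mathcal{L}}\mathbb{N}\to C(X)$ denotes the conditional expectation (known to exist) with $G(fs^k(s^* )^lg)=\delta_{k,l}\,f I_k^{-1}g$ for $f,g\in C(X)$, $k,l\in\mathbb{N}$. $\widetilde{H}$ is the Hilbert space with orthonormal basis $(e_{(x,n)})_{(x,n)\in X\times\mathbb{Z}}$, $\widetilde{M}_fe_{(x,n)}=f(x)e_{(x,n)}$, and $\widetilde{S}e_{(x,n)}=(L_0(1_X)(x))^{-1/2}\sum_{y\in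 T^{-1}(\{x\})}e_{(y,n+1)}$. *)

theory Defs
  imports "HOL-Analysis.Analysis"
begin

definition covering_map :: "('a::topological_space \<Rightarrow> 'a) \<Rightarrow> bool" where
  "covering_map T \<longleftrightarrow> continuous_on UNIV T \<and> surj T \<and>
     (\<forall>x. \<exists>V. open V \<and> x \<in> V \<and>
        (\<exists>\<U>. (\<forall>U\<in>\<U>. open U) \<and> pairwise disjnt \<U> \<and> \<Union>\<U> = T -` V \<and>
              (\<forall>U\<in>\<U>. \<exists>g. homeomorphism U V T g)))"

definition L0one :: "('a \<Rightarrow> 'a) \<Rightarrow> 'a \<Rightarrow> real" where
  "L0one T x = real (card {y. T y = x})"

(* I_k = ind(E) alpha(ind(E)) ... alpha^{k-1}(ind(E)),  ind(E) = L0one T o T *)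
definition Ik :: "('a \<Rightarrow> 'a) \<Rightarrow> nat \<Rightarrow> 'a \<Rightarrow> real" where
  "Ik T k x = (\<Prod>j<k. L0one T ((T ^^ Suc j) x))"

definition ell2 :: "('a \<times> int \<Rightarrow> complex) set" where
  "ell2 = {v. (\<lambda>p. (cmod (v p))\<^sup>2) summable_on UNIV}"

definition l2norm :: "('a \<times> int \<Rightarrow> complex) \<Rightarrow> real" where
  "l2norm v = sqrt (\<Sum>\<^sub>\<infinity>p. (cmod (v p))\<^sup>2)"

(* orthonormal basis vector e_p; <w, e_q> = w q *)
definition basis_vec :: "'a \<times> int \<Rightarrow> ('a \<times> int \<Rightarrow> complex)" where
  "basis_vec p = (\<lambda>q. if q = p then 1 else 0)"

type_synonym 'a op = "('a \<times> int \<Rightarrow> complex) \<Rightarrow> ('a \<times> int \<Rightarrow> complex)"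

definition Mop :: "('a \<Rightarrow> complex) \<Rightarrow> 'a op" where
  "Mop f = (\<lambda>v p. f (fst p) * v p)"

(* \<tilde>S e_(x,n) = L0(1)(x)^{-1/2} \<Sum>_{T y = x} e_(y,n+1) *)
definition Sop :: "('a \<Rightarrow> 'a) \<Rightarrow> 'a op" where
  "Sop T = (\<lambda>v p. complex_of_real (1 / sqrt (L0one T (T (fst p)))) * v (T (fst p), snd p - 1))"

definition Sstar :: "('a \<Rightarrow> 'a) \<Rightarrow> 'a op" where
  "Sstar T = (\<lambda>v p. complex_of_real (1 / sqrt (L0one T (fst p))) *
                     (\<Sum>y\<in>{y. T y = fst p}. v (y, snd p + 1)))"

inductive_set alg0 :: "('a::topological_space \<Rightarrow> 'a) \<Rightarrow> 'a op set" for T where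
  mult: "continuous_on UNIV f \<Longrightarrow> Mop f \<in> alg0 T"
| S: "Sop T \<in> alg0 T"
| Sstar: "Sstar T \<in> alg0 T"
| add: "a \<in> alg0 T \<Longrightarrow> b \<in> alg0 T \<Longrightarrow> (\<lambda>v p. a v p + b v p) \<in> alg0 T"
| scale: "a \<in> alg0 T \<Longrightarrow> (\<lambda>v p. c * a v p) \<in> alg0 T"
| comp: "a \<in> alg0 T \<Longrightarrow> b \<in> alg0 T \<Longrightarrow> a \<circ> b \<in> alg0 T"

definition op_close :: "'a op \<Rightarrow> 'a op \<Rightarrow> real \<Rightarrow> bool" where
  "op_close a b eps \<longleftrightarrow> (\<forall>v\<in>ell2. (\<lambda>p. a v p - b v p) \<in> ell2 \<and>
                                  l2norm (\<lambda>p. a v p - b v p) \<le> eps * l2norm v)"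

(* \<tilde>\<psi>(C(X) \<rtimes> N): the norm closure of alg0, i.e. the C*-algebra generated by
   the \<tilde>M_f and \<tilde>S *)
definition crossed :: "('a::topological_space \<Rightarrow> 'a) \<Rightarrow> 'a op set" where
  "crossed T = {b. \<forall>eps>0. \<exists>a\<in>alg0 T. op_close b a eps}"

(* the conditional expectation G, transported along the faithful representation *)
definition is_cond_exp :: "('a::topological_space \<Rightarrow> 'a) \<Rightarrow> ('a op \<Rightarrow> 'a \<Rightarrow> complex) \<Rightarrow> bool" where
  "is_cond_exp T G \<longleftrightarrow>
     (\<forall>b\<in>crossed T. continuous_on UNIV (G b)) \<and>
     (\<forall>a\<in>crossed T. \<forall>b\<in>crossed T. G (\<lambda>v p. a v p + b v p) = (\<lambda>x. G a x + G b x)) \<and>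
     (\<forall>a\<in>crossed T. \<forall>c. G (\<lambda>v p. c * a v p) = (\<lambda>x. c * G a x)) \<and>
     (\<forall>a\<in>crossed T. \<forall>b\<in>crossed T. \<forall>eps\<ge>0. op_close a b eps \<longrightarrow>
         (\<forall>x. cmod (G a x - G b x) \<le> eps)) \<and>
     (\<forall>f g k l. continuous_on UNIV f \<longrightarrow> continuous_on UNIV g \<longrightarrow>
        G (Mop f \<circ> (Sop T ^^ k) \<circ> (Sstar T ^^ l) \<circ> Mop g) =
          (\<lambda>x. if k = l then f x * g x / complex_of_real (Ik T k x) else 0))"

end

theory Submission
  imports Defs
begin


lemma l2norm_nonneg: "0 \<le> l2norm v"
  unfolding l2norm_def by (simp add: infsum_nonneg)

lemma ell2_point:
  assumes "v \<in> ell2" shows "cmod (v p) \<le> l2norm v"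
proof -
  have s: "(\<lambda>q. (cmod (v q))\<^sup>2) summable_on UNIV" using assms by (simp add: ell2_def)
  have "(\<Sum>\<^sub>\<infinity>q\<in>{p}. (cmod (v q))\<^sup>2) \<le> (\<Sum>\<^sub>\<infinity>q. (cmod (v q))\<^sup>2)"
    by (rule infsum_mono_neutral) (use s in auto)
  hence "(cmod (v p))\<^sup>2 \<le> (\<Sum>\<^sub>\<infinity>q. (cmod (v q))\<^sup>2)" by simp
  hence "sqrt ((cmod (v p))\<^sup>2) \<le> l2norm v" unfolding l2norm_def by (rule real_sqrt_le_mono)
  thus ?thesis by simp
qed

lemma ell2_restrict:
  assumes "v \<in> ell2"
  shows "(\<lambda>q. if q \<in> F then v q else 0) \<in> ell2 \<and> l2norm (\<lambda>q. if q \<in> F then v q else 0) \<le> l2norm v"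
proof -
  have s: "(\<lambda>q. (cmod (v q))\<^sup>2) summable_on UNIV" using assms by (simp add: ell2_def)
  have s2: "(\<lambda>q. (cmod (if q \<in> F then v q else 0))\<^sup>2) summable_on UNIV"
    by (rule summable_on_comparison_test[OF s]) auto
  have "(\<Sum>\<^sub>\<infinity>q. (cmod (if q \<in> F then v q else 0))\<^sup>2) \<le> (\<Sum>\<^sub>\<infinity>q. (cmod (v q))\<^sup>2)"
    by (rule infsum_mono[OF s2 s]) auto
  thus ?thesis using s2 unfolding ell2_def l2norm_def by (auto intro: real_sqrt_le_mono)
qed

lemma basis_ell2: "basis_vec p \<in> ell2 \<and> l2norm (basis_vec p) = 1"
proof -
  have e: "(\<lambda>q. (cmod (basis_vec p q))\<^sup>2) summable_on UNIV \<longleftrightarrow> (\<lambda>q. (cmod (basis_vec p q))\<^sup>2) summable_on {p}"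
    by (rule summable_on_cong_neutral) (auto simp: basis_vec_def)
  have i: "(\<Sum>\<^sub>\<infinity>q. (cmod (basis_vec p q))\<^sup>2) = (\<Sum>\<^sub>\<infinity>q\<in>{p}. (cmod (basis_vec p q))\<^sup>2)"
    by (rule infsum_cong_neutral) (auto simp: basis_vec_def)
  show ?thesis using e i unfolding ell2_def l2norm_def by (simp add: basis_vec_def)
qed

lemma zero_ell2: "(\<lambda>p. 0) \<in> ell2 \<and> l2norm (\<lambda>p. 0) = 0"
  by (simp add: ell2_def l2norm_def)

lemma op_close_point:
  assumes "op_close b a eps" "v \<in> ell2"
  shows "cmod (b v p - a v p) \<le> eps * l2norm v"
  using assms ell2_point[of "\<lambda>p. b v p - a v p" p] unfolding op_close_def by force




definition Lop :: "('a \<Rightarrow> 'a) \<Rightarrow> ('a \<Rightarrow> complex) \<Rightarrow> 'a \<Rightarrow> complex" where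
  "Lop T u x = complex_of_real (1 / L0one T x) * (\<Sum>y\<in>{y. T y = x}. u y)"

lemma Mop_Mop: "Mop f (Mop g v) = Mop (\<lambda>x. f x * g x) v"
  by (simp add: Mop_def fun_eq_iff mult.assoc)

lemma Sop_Mop: "Sop T (Mop g v) = Mop (g \<circ> T) (Sop T v)"
  by (simp add: Mop_def Sop_def fun_eq_iff mult.left_commute)

lemma Mop_Sstar: "Mop f (Sstar T v) = Sstar T (Mop (f \<circ> T) v)"
proof (rule ext)
  fix p :: "'a \<times> int"
  have "(\<Sum>y\<in>{y. T y = fst p}. f (T y) * v (y, snd p + 1)) = (\<Sum>y\<in>{y. T y = fst p}. f (fst p) * v (y, snd p + 1))"
    by (rule sum.cong) auto
  thus "Mop f (Sstar T v) p = Sstar T (Mop (f \<circ> T) v) p"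
    by (simp add: Mop_def Sstar_def sum_distrib_left mult.left_commute)
qed

lemma Sstar_Mop_Sop: "Sstar T (Mop u (Sop T v)) = Mop (Lop T u) v"
proof (rule ext)
  fix p :: "'a \<times> int"
  obtain x n where p: "p = (x, n)" by force
  define c where "c = complex_of_real (1 / sqrt (L0one T x))"
  have cc: "c * c = complex_of_real (1 / L0one T x)"
    unfolding c_def of_real_mult[symmetric] 
    by (simp add: L0one_def real_sqrt_mult[symmetric])
  have "(\<Sum>y\<in>{y. T y = x}. u y * (complex_of_real (1 / sqrt (L0one T (T y))) * v (T y, n + 1 - 1)))
      = (\<Sum>y\<in>{y. T y = x}. c * v (x, n) * u y)"
    by (rule sum.cong) (auto simp: c_def)
  moreover have "Sstar T (Mop u (Sop T v)) p = c * (\<Sum>y\<in>{y. T y = x}. u y * (complex_of_real (1 / sqrt (L0one T (T y))) * v (T y, n + 1 - 1)))"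
    unfolding p Sstar_def Mop_def Sop_def c_def by (simp only: fst_conv snd_conv)
  ultimately have "Sstar T (Mop u (Sop T v)) p = c * (c * v (x, n) * (\<Sum>y\<in>{y. T y = x}. u y))"
    by (simp only: sum_distrib_left)
  also have "\<dots> = Mop (Lop T u) v p"
  proof -
    have "c * (c * v (x, n) * (\<Sum>y\<in>{y. T y = x}. u y)) = (c * c) * (\<Sum>y\<in>{y. T y = x}. u y) * v (x, n)"
      by (simp only: mult_ac)
    thus ?thesis unfolding p Mop_def Lop_def cc by simp
  qed
  finally show "Sstar T (Mop u (Sop T v)) p = Mop (Lop T u) v p" .
qed

lemma funpow_app_Suc: "(f ^^ Suc n) x = (f ^^ n) (f x)"
  by (metis comp_apply funpow_Suc_right)

lemma Sop_pow_Mop: "(Sop T ^^ k) (Mop g v) = Mop (g \<circ> (T ^^ k)) ((Sop T ^^ k) v)"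
proof (induction k arbitrary: v)
  case 0 then show ?case by simp
next
  case (Suc k)
  have "(Sop T ^^ Suc k) (Mop g v) = Sop T (Mop (g \<circ> (T ^^ k)) ((Sop T ^^ k) v))"
    using Suc by (simp add: comp_def)
  also have "\<dots> = Mop (g \<circ> (T ^^ k) \<circ> T) ((Sop T ^^ Suc k) v)" by (simp add: Sop_Mop)
  also have "g \<circ> (T ^^ k) \<circ> T = g \<circ> (T ^^ Suc k)" by (simp add: funpow_Suc_right comp_assoc del: funpow.simps)
  finally show ?case .
qed

lemma Mop_Sstar_pow: "Mop f ((Sstar T ^^ l) v) = (Sstar T ^^ l) (Mop (f \<circ> (T ^^ l)) v)"
proof (induction l arbitrary: f)
  case 0 then show ?case by simp
next
  case (Suc l)
  have "Mop f ((Sstar T ^^ Suc l) v) = Sstar T (Mop (f \<circ> T) ((Sstar T ^^ l) v))"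
    by (simp add: Mop_Sstar)
  also have "\<dots> = Sstar T ((Sstar T ^^ l) (Mop (f \<circ> T \<circ> (T ^^ l)) v))" using Suc by (simp add: comp_def)
  also have "f \<circ> T \<circ> (T ^^ l) = f \<circ> (T ^^ Suc l)" by (simp add: comp_assoc)
  finally show ?case by simp
qed

lemma Sstar_Mop_Sop_pow: "(Sstar T ^^ j) (Mop u ((Sop T ^^ j) w)) = Mop ((Lop T ^^ j) u) w"
proof (induction j arbitrary: u w)
  case 0 then show ?case by simp
next
  case (Suc j)
  have "(Sstar T ^^ Suc j) (Mop u ((Sop T ^^ Suc j) w)) = (Sstar T ^^ j) (Sstar T (Mop u (Sop T ((Sop T ^^ j) w))))"
    unfolding funpow_app_Suc[where f = "Sstar T"] by simp
  also have "\<dots> = (Sstar T ^^ j) (Mop (Lop T u) ((Sop T ^^ j) w))" by (simp add: Sstar_Mop_Sop)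
  also have "\<dots> = Mop ((Lop T ^^ j) (Lop T u)) w" using Suc by simp
  finally show ?case by (simp only: funpow_app_Suc[where f = "Lop T"])
qed

definition mon :: "('a \<Rightarrow> 'a) \<Rightarrow> ('a \<Rightarrow> complex) \<times> nat \<times> nat \<times> ('a \<Rightarrow> complex) \<Rightarrow> 'a op" where
  "mon T m = (case m of (f, k, l, g) \<Rightarrow> Mop f \<circ> (Sop T ^^ k) \<circ> (Sstar T ^^ l) \<circ> Mop g)"

definition mcomp :: "('a \<Rightarrow> 'a) \<Rightarrow> ('a \<Rightarrow> complex) \<times> nat \<times> nat \<times> ('a \<Rightarrow> complex)
   \<Rightarrow> ('a \<Rightarrow> complex) \<times> nat \<times> nat \<times> ('a \<Rightarrow> complex) \<Rightarrow> ('a \<Rightarrow> complex) \<times> nat \<times> nat \<times> ('a \<Rightarrow> complex)" where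
  "mcomp T m1 m2 = (case m1 of (f, k, l, g) \<Rightarrow> case m2 of (h, k', l', r) \<Rightarrow>
     if l \<le> k' then ((\<lambda>x. f x * (Lop T ^^ l) (\<lambda>y. g y * h y) ((T ^^ k) x)), k + (k' - l), l', r)
     else (f, k, l - k' + l', (\<lambda>x. (Lop T ^^ k') (\<lambda>y. g y * h y) ((T ^^ l') x) * r x)))"

lemma mono_app: "mon T (f, k, l, g) v = Mop f ((Sop T ^^ k) ((Sstar T ^^ l) (Mop g v)))"
  by (simp add: mon_def)

lemma mono_comp: "mon T m1 (mon T m2 v) = mon T (mcomp T m1 m2) v"
proof -
  obtain f k l g where m1: "m1 = (f, k, l, g)" by (cases m1) auto
  obtain h k' l' r where m2: "m2 = (h, k', l', r)" by (cases m2) auto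
  define gh where "gh = (\<lambda>y. g y * h y)"
  define w where "w = (Sstar T ^^ l') (Mop r v)"
  have L: "mon T m1 (mon T m2 v) = Mop f ((Sop T ^^ k) ((Sstar T ^^ l) (Mop gh ((Sop T ^^ k') w))))"
    by (simp add: m1 m2 mono_app Mop_Mop gh_def w_def)
  show ?thesis
  proof (cases "l \<le> k'")
    case True
    have k': "(Sop T ^^ k') w = (Sop T ^^ l) ((Sop T ^^ (k' - l)) w)"
      using True by (metis funpow_add le_add_diff_inverse comp_apply)
    have "mon T m1 (mon T m2 v) = Mop f ((Sop T ^^ k) (Mop ((Lop T ^^ l) gh) ((Sop T ^^ (k' - l)) w)))"
      unfolding L k' Sstar_Mop_Sop_pow ..
    also have "\<dots> = Mop (\<lambda>x. f x * (Lop T ^^ l) gh ((T ^^ k) x)) ((Sop T ^^ (k + (k' - l))) w)"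
      by (simp add: Sop_pow_Mop Mop_Mop funpow_add)
    also have "\<dots> = mon T (mcomp T m1 m2) v"
      using True by (simp add: mcomp_def m1 m2 mono_app gh_def w_def)
    finally show ?thesis .
  next
    case False
    have l: "(Sstar T ^^ l) x = (Sstar T ^^ (l - k')) ((Sstar T ^^ k') x)" for x
      using False by (metis funpow_add le_add_diff_inverse2 nat_le_linear comp_apply)
    have "mon T m1 (mon T m2 v) = Mop f ((Sop T ^^ k) ((Sstar T ^^ (l - k')) (Mop ((Lop T ^^ k') gh) w)))"
      unfolding L l Sstar_Mop_Sop_pow ..
    also have "\<dots> = Mop f ((Sop T ^^ k) ((Sstar T ^^ (l - k' + l')) (Mop (\<lambda>x. (Lop T ^^ k') gh ((T ^^ l') x) * r x) v)))"
      by (simp add: w_def Mop_Sstar_pow Mop_Mop funpow_add)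
    also have "\<dots> = mon T (mcomp T m1 m2) v"
      using False by (simp add: mcomp_def m1 m2 mono_app gh_def)
    finally show ?thesis .
  qed
qed




lemma open_vimage_UNIV: "open B \<Longrightarrow> continuous_on UNIV f \<Longrightarrow> open (f -` B)"
  using continuous_on_open_vimage[of UNIV f] by auto

definition evc :: "('a::topological_space \<Rightarrow> 'a) \<Rightarrow> 'a \<Rightarrow> 'a set \<Rightarrow> 'a set set \<Rightarrow> ('a set \<Rightarrow> 'a \<Rightarrow> 'a) \<Rightarrow> bool" where
  "evc T x0 V \<U> gs \<longleftrightarrow> open V \<and> x0 \<in> V \<and> (\<forall>x\<in>V. bij_betw (\<lambda>U. gs U x) \<U> {y. T y = x})
            \<and> (\<forall>U\<in>\<U>. continuous_on V (gs U))"

lemma covering_local: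
  assumes "covering_map T"
  shows "\<exists>V \<U> gs. evc T x0 V \<U> gs"
proof -
  have "\<exists>V. open V \<and> x0 \<in> V \<and>
        (\<exists>\<U>. (\<forall>U\<in>\<U>. open U) \<and> pairwise disjnt \<U> \<and> \<Union>\<U> = T -` V \<and>
              (\<forall>U\<in>\<U>. \<exists>g. homeomorphism U V T g))"
    by (rule spec[OF conjunct2[OF conjunct2[OF assms[unfolded covering_map_def]]]])
  then obtain V \<U> where V: "open V" "x0 \<in> V" "pairwise disjnt \<U>" "\<Union>\<U> = T -` V"
     "\<forall>U\<in>\<U>. \<exists>g. homeomorphism U V T g"
    by (elim exE conjE) (intro that; assumption)
  obtain gs where gs: "\<forall>U\<in>\<U>. homeomorphism U V T (gs U)" using bchoice[OF V(5)] by blast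
  have h1: "gs U y \<in> U" if "U \<in> \<U>" "y \<in> V" for U y
    using gs that unfolding homeomorphism_def by blast
  have h2: "T (gs U y) = y" if "U \<in> \<U>" "y \<in> V" for U y
    using gs that unfolding homeomorphism_def by blast
  have h3: "gs U (T y) = y" if "U \<in> \<U>" "y \<in> U" for U y
    using gs that unfolding homeomorphism_def by blast
  have h4: "continuous_on V (gs U)" if "U \<in> \<U>" for U
    using gs that unfolding homeomorphism_def by blast
  have bij: "bij_betw (\<lambda>U. gs U x) \<U> {y. T y = x}" if x: "x \<in> V" for x
  proof (rule bij_betwI')
    fix U1 U2 assume U: "U1 \<in> \<U>" "U2 \<in> \<U>"
    have m: "gs U1 x \<in> U1" "gs U2 x \<in> U2" using h1 U x by auto
    show "(gs U1 x = gs U2 x) = (U1 = U2)"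
    proof
      assume "gs U1 x = gs U2 x"
      hence "\<not> disjnt U1 U2" using m unfolding disjnt_def by auto
      thus "U1 = U2" using V(3) U unfolding pairwise_def by blast
    qed simp
  next
    fix U assume "U \<in> \<U>"
    thus "gs U x \<in> {y. T y = x}" using h2 x by auto
  next
    fix y assume y: "y \<in> {y. T y = x}"
    hence "y \<in> \<Union>\<U>" using V(4) x by auto
    then obtain U where U: "U \<in> \<U>" "y \<in> U" by blast
    hence "gs U (T y) = y" using h3 by blast
    thus "\<exists>U\<in>\<U>. y = gs U x" using U y by auto
  qed
  show ?thesis
    apply (rule exI[of _ V]) apply (rule exI[of _ \<U>]) apply (rule exI[of _ gs])
    using V(1,2) bij h4 unfolding evc_def by blast
qed

definition lc :: "('a::topological_space \<Rightarrow> 'b) \<Rightarrow> bool" where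
  "lc h \<longleftrightarrow> (\<forall>x. \<exists>V. open V \<and> x \<in> V \<and> (\<forall>x'\<in>V. h x' = h x))"

lemma lc_L0: assumes "covering_map T" shows "lc (L0one T)"
  unfolding lc_def
proof
  fix x0
  obtain V and gs :: "'a set \<Rightarrow> 'a \<Rightarrow> 'a" and \<U> where V: "open V" "x0 \<in> V" "\<forall>x\<in>V. bij_betw (\<lambda>U. gs U x) \<U> {y. T y = x}"
     "\<forall>U\<in>\<U>. continuous_on V (gs U)"
  proof -
    obtain V \<U> gs where "evc T x0 V \<U> gs" using covering_local[OF assms, of x0] by blast
    thus thesis using that unfolding evc_def by blast
  qed
  have e: "L0one T x = real (card \<U>)" if "x \<in> V" for x
    using bij_betw_same_card[OF V(3)[rule_format, OF that]] unfolding L0one_def by simp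
  show "\<exists>V. open V \<and> x0 \<in> V \<and> (\<forall>x'\<in>V. L0one T x' = L0one T x0)"
    by (rule exI[of _ V]) (use V e in auto)
qed

lemma lc_cont: fixes h :: "'a::t2_space \<Rightarrow> 'b" assumes "lc h" shows "continuous_on UNIV (\<lambda>x. \<phi> (h x))"
proof (rule continuous_at_imp_continuous_on, rule ballI)
  fix x
  obtain V where V: "open V" "x \<in> V" "\<forall>x'\<in>V. h x' = h x" using assms unfolding lc_def by blast
  have "continuous_on V (\<lambda>x'. \<phi> (h x'))"
  proof (rule continuous_on_eq[OF continuous_on_const[of V "\<phi> (h x)"]])
    fix x' assume "x' \<in> V"
    hence "h x' = h x" using V(3) by blast
    thus "\<phi> (h x) = \<phi> (h x')" by (simp only:)
  qed
  thus "isCont (\<lambda>x. \<phi> (h x)) x" using V(1,2) continuous_on_eq_continuous_at by blast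
qed

lemma lc_comb: "lc h1 \<Longrightarrow> lc h2 \<Longrightarrow> lc (\<lambda>x. F (h1 x) (h2 x))"
  unfolding lc_def
proof
  fix x assume a: "\<forall>x. \<exists>V. open V \<and> x \<in> V \<and> (\<forall>x'\<in>V. h1 x' = h1 x)"
     "\<forall>x. \<exists>V. open V \<and> x \<in> V \<and> (\<forall>x'\<in>V. h2 x' = h2 x)"
  obtain V1 where 1: "open V1" "x \<in> V1" "\<forall>x'\<in>V1. h1 x' = h1 x" using a(1) by blast
  obtain V2 where 2: "open V2" "x \<in> V2" "\<forall>x'\<in>V2. h2 x' = h2 x" using a(2) by blast
  have "\<forall>x'\<in>V1 \<inter> V2. F (h1 x') (h2 x') = F (h1 x) (h2 x)"
  proof
    fix x' assume "x' \<in> V1 \<inter> V2"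
    hence "h1 x' = h1 x" "h2 x' = h2 x" using 1(3) 2(3) by blast+
    thus "F (h1 x') (h2 x') = F (h1 x) (h2 x)" by (simp only:)
  qed
  hence "open (V1 \<inter> V2) \<and> x \<in> V1 \<inter> V2 \<and> (\<forall>x'\<in>V1 \<inter> V2. F (h1 x') (h2 x') = F (h1 x) (h2 x))"
    using 1(1,2) 2(1,2) by blast
  thus "\<exists>V. open V \<and> x \<in> V \<and> (\<forall>x'\<in>V. F (h1 x') (h2 x') = F (h1 x) (h2 x))" by (rule exI)
qed

lemma lc_compose: assumes "lc h" "continuous_on UNIV f" shows "lc (\<lambda>x. h (f x))"
  unfolding lc_def
proof
  fix x
  obtain V where V: "open V" "f x \<in> V" "\<forall>x'\<in>V. h x' = h (f x)" using assms(1) unfolding lc_def by blast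
  have "open (f -` V) \<and> x \<in> f -` V \<and> (\<forall>x'\<in>f -` V. h (f x') = h (f x))"
    using V open_vimage_UNIV[OF V(1) assms(2)] by blast
  thus "\<exists>V. open V \<and> x \<in> V \<and> (\<forall>x'\<in>V. h (f x') = h (f x))" by (rule exI)
qed

lemma cont_funpow: fixes T :: "'a::topological_space \<Rightarrow> 'a" shows "continuous_on UNIV T \<Longrightarrow> continuous_on UNIV (T ^^ n)"
proof (induction n)
  case 0
  have "T ^^ 0 = (\<lambda>x. x)" by (simp add: fun_eq_iff)
  then show ?case by simp
next
  case (Suc n)
  have "T ^^ Suc n = (\<lambda>x. T ((T ^^ n) x))" by (simp add: fun_eq_iff)
  moreover have "continuous_on UNIV (\<lambda>x. T ((T ^^ n) x))"
    by (rule continuous_on_compose2[OF Suc(2) Suc(1)[OF Suc(2)]]) simp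
  ultimately show ?case by simp
qed

lemma cov_cont: "covering_map T \<Longrightarrow> continuous_on UNIV T"
  by (simp add: covering_map_def)

lemma lc_Ik: assumes "covering_map T" shows "lc (Ik T k)"
proof (induction k)
  case 0 then show ?case unfolding lc_def Ik_def by (auto intro!: exI[of _ UNIV])
next
  case (Suc k)
  have "lc (\<lambda>x. L0one T ((T ^^ Suc k) x))"
    by (rule lc_compose[OF lc_L0[OF assms] cont_funpow[OF cov_cont[OF assms]]])
  from lc_comb[OF Suc this, of "(*)"] show ?case
    by (simp add: Ik_def)
qed

lemma Lop_cont:
  fixes T :: "'a::t2_space \<Rightarrow> 'a"
  assumes "covering_map T" "continuous_on UNIV u"
  shows "continuous_on UNIV (Lop T u)"
proof (rule continuous_at_imp_continuous_on, rule ballI)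
  fix x0
  obtain V and gs :: "'a set \<Rightarrow> 'a \<Rightarrow> 'a" and \<U> where V: "open V" "x0 \<in> V" "\<forall>x\<in>V. bij_betw (\<lambda>U. gs U x) \<U> {y. T y = x}"
     "\<forall>U\<in>\<U>. continuous_on V (gs U)"
  proof -
    obtain V \<U> gs where "evc T x0 V \<U> gs" using covering_local[OF assms(1), of x0] by blast
    thus thesis using that unfolding evc_def by blast
  qed
  have eq: "Lop T u x = complex_of_real (1 / real (card \<U>)) * (\<Sum>U\<in>\<U>. u (gs U x))" if "x \<in> V" for x
  proof -
    have b: "bij_betw (\<lambda>U. gs U x) \<U> {y. T y = x}" using V(3) that by blast
    show ?thesis unfolding Lop_def L0one_def bij_betw_same_card[OF b]
      using sum.reindex_bij_betw[OF b, of u] by simp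
  qed
  have "continuous_on V (\<lambda>x. complex_of_real (1 / real (card \<U>)) * (\<Sum>U\<in>\<U>. u (gs U x)))"
    by (intro continuous_intros continuous_on_compose2[OF assms(2)]) (use V(4) in auto)
  hence "continuous_on V (Lop T u)"
    by (rule continuous_on_eq) (rule eq[symmetric])
  thus "isCont (Lop T u) x0" using V continuous_on_eq_continuous_at by blast
qed

lemma Lop_pow_cont:
  fixes T :: "'a::t2_space \<Rightarrow> 'a"
  assumes "covering_map T" "continuous_on UNIV u"
  shows "continuous_on UNIV ((Lop T ^^ j) u)"
  by (induction j) (auto intro: Lop_cont[OF assms(1)] assms(2))




definition ok :: "('a::topological_space \<Rightarrow> complex) \<times> nat \<times> nat \<times> ('a \<Rightarrow> complex) \<Rightarrow> bool" where
  "ok m \<longleftrightarrow> continuous_on UNIV (fst m) \<and> continuous_on UNIV (snd (snd (snd m)))"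

lemma mcomp_ok:
  fixes T :: "'a::t2_space \<Rightarrow> 'a"
  assumes T: "covering_map T" and "ok m1" "ok m2"
  shows "ok (mcomp T m1 m2)"
proof -
  obtain f k l g where m1: "m1 = (f, k, l, g)" by (cases m1) auto
  obtain h k' l' r where m2: "m2 = (h, k', l', r)" by (cases m2) auto
  have c: "continuous_on UNIV f" "continuous_on UNIV g" "continuous_on UNIV h" "continuous_on UNIV r"
    using assms m1 m2 by (auto simp: ok_def)
  have gh: "continuous_on UNIV (\<lambda>y. g y * h y)" using c by (intro continuous_intros)
  have L: "continuous_on UNIV ((Lop T ^^ j) (\<lambda>y. g y * h y))" for j by (rule Lop_pow_cont[OF T gh])
  have P: "continuous_on UNIV (T ^^ j)" for j by (rule cont_funpow[OF cov_cont[OF T]])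
  have "continuous_on UNIV (\<lambda>x. (Lop T ^^ j) (\<lambda>y. g y * h y) ((T ^^ i) x))" for i j
    by (rule continuous_on_compose2[OF L P]) auto
  thus ?thesis using c unfolding ok_def mcomp_def m1 m2
    by (auto intro!: continuous_intros)
qed




definition lin :: "'a op \<Rightarrow> bool" where
  "lin a \<longleftrightarrow> (\<forall>v w. a (\<lambda>p. v p + w p) = (\<lambda>p. a v p + a w p)) \<and> (\<forall>c v. a (\<lambda>p. c * v p) = (\<lambda>p. c * a v p))"

lemma lin_Mop: "lin (Mop f)"
  by (simp add: lin_def Mop_def fun_eq_iff algebra_simps)

lemma lin_Sop: "lin (Sop T)"
  by (simp add: lin_def Sop_def fun_eq_iff add_divide_distrib)

lemma lin_Sstar: "lin (Sstar T)"
  by (simp add: lin_def Sstar_def fun_eq_iff add_divide_distrib sum.distrib sum_distrib_left times_divide_eq_right)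

lemma lin_comp: "lin a \<Longrightarrow> lin b \<Longrightarrow> lin (a \<circ> b)"
  by (simp add: lin_def)

lemma lin_pow: "lin a \<Longrightarrow> lin (a ^^ n)"
proof (induction n)
  case 0 then show ?case by (simp add: lin_def)
next
  case (Suc n)
  have e: "a ^^ Suc n = a \<circ> (a ^^ n)" by simp
  show ?case unfolding e by (rule lin_comp[OF Suc(2) Suc(1)[OF Suc(2)]])
qed

lemma lin_mono: "lin (mon T m)"
proof -
  obtain f k l g where m: "m = (f, k, l, g)" by (cases m) auto
  show ?thesis unfolding m mon_def
    by (simp only: prod.case) (intro lin_comp lin_pow lin_Mop lin_Sop lin_Sstar)
qed

lemma lin_zero: "lin a \<Longrightarrow> a (\<lambda>p. 0) = (\<lambda>p. 0)"
proof -
  assume "lin a"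
  hence "\<forall>c v. a (\<lambda>p. c * v p) = (\<lambda>p. c * a v p)" unfolding lin_def by blast
  from spec[OF spec[OF this, of 0], of "\<lambda>p. 0"] show ?thesis by simp
qed

lemma lin_sum_list: "lin a \<Longrightarrow> a (\<lambda>p. \<Sum>m\<leftarrow>xs. h m p) = (\<lambda>p. \<Sum>m\<leftarrow>xs. a (h m) p)"
proof (induction xs)
  case Nil then show ?case by (simp add: lin_zero)
next
  case (Cons x xs)
  then show ?case unfolding lin_def by simp
qed




definition sumop :: "('a \<Rightarrow> 'a) \<Rightarrow> (('a \<Rightarrow> complex) \<times> nat \<times> nat \<times> ('a \<Rightarrow> complex)) list \<Rightarrow> 'a op" where
  "sumop T ms = (\<lambda>v p. \<Sum>m\<leftarrow>ms. mon T m v p)"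

lemma sum_list_concat_map:
  "(\<Sum>m\<leftarrow>concat (map F xs). h m) = (\<Sum>x\<leftarrow>xs. \<Sum>m\<leftarrow>F x. h m)"
  by (induction xs) auto

lemma sumop_comp:
  "sumop T ms1 (sumop T ms2 v) = sumop T (concat (map (\<lambda>m1. map (mcomp T m1) ms2) ms1)) v"
proof -
  have "sumop T ms1 (sumop T ms2 v) = (\<lambda>p. \<Sum>m1\<leftarrow>ms1. \<Sum>m2\<leftarrow>ms2. mon T m1 (mon T m2 v) p)"
    unfolding sumop_def by (simp add: lin_sum_list[OF lin_mono])
  also have "\<dots> = sumop T (concat (map (\<lambda>m1. map (mcomp T m1) ms2) ms1)) v"
    unfolding sumop_def sum_list_concat_map by (simp add: mono_comp comp_def)
  finally show ?thesis .
qed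

lemma alg0_normal:
  fixes T :: "'a::t2_space \<Rightarrow> 'a"
  assumes T: "covering_map T" and a: "a \<in> alg0 T"
  shows "\<exists>ms. (\<forall>m\<in>set ms. ok m) \<and> a = sumop T ms"
  using a
proof (induction rule: alg0.induct)
  case (mult f)
  show ?case
    by (rule exI[of _ "[(f, 0, 0, \<lambda>_. 1)]"]) (use mult in \<open>auto simp: ok_def sumop_def mon_def Mop_def fun_eq_iff\<close>)
next
  case S
  show ?case
    by (rule exI[of _ "[(\<lambda>_. 1, 1, 0, \<lambda>_. 1)]"]) (auto simp: ok_def sumop_def mon_def Mop_def fun_eq_iff)
next
  case Sstar
  show ?case
    by (rule exI[of _ "[(\<lambda>_. 1, 0, 1, \<lambda>_. 1)]"]) (auto simp: ok_def sumop_def mon_def Mop_def fun_eq_iff)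
next
  case (add a b)
  then obtain ms1 ms2 where "\<forall>m\<in>set ms1. ok m" "a = sumop T ms1" "\<forall>m\<in>set ms2. ok m" "b = sumop T ms2"
    by blast
  thus ?case by (intro exI[of _ "ms1 @ ms2"]) (auto simp: sumop_def)
next
  case (scale a c)
  then obtain ms where ms: "\<forall>m\<in>set ms. ok m" "a = sumop T ms" by blast
  define sc where "sc = (\<lambda>(f::'a \<Rightarrow> complex, k::nat, l::nat, g::'a \<Rightarrow> complex). (\<lambda>x. c * f x, k, l, g))"
  have okk: "\<forall>m\<in>set (map sc ms). ok m" using ms(1)
    by (auto simp: sc_def ok_def split: prod.splits intro!: continuous_intros)
  have "mon T (sc m) v p = c * mon T m v p" for m v p
    by (cases m) (simp add: sc_def mon_def Mop_def)
  hence "(\<lambda>v p. c * a v p) = sumop T (map sc ms)"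
    unfolding ms(2) sumop_def by (simp add: sum_list_const_mult[symmetric] o_def)
  thus ?case using okk by blast
next
  case (comp a b)
  then obtain ms1 ms2 where ms: "\<forall>m\<in>set ms1. ok m" "a = sumop T ms1" "\<forall>m\<in>set ms2. ok m" "b = sumop T ms2"
    by blast
  have "\<forall>m\<in>set (concat (map (\<lambda>m1. map (mcomp T m1) ms2) ms1)). ok m"
    using ms mcomp_ok[OF T] by auto
  moreover have "a \<circ> b = sumop T (concat (map (\<lambda>m1. map (mcomp T m1) ms2) ms1))"
    unfolding ms(2,4) by (rule ext) (simp add: sumop_comp)
  ultimately show ?case by blast
qed




definition sv :: "complex \<Rightarrow> 'a \<times> int \<Rightarrow> ('a \<times> int \<Rightarrow> complex)" where
  "sv c p = (\<lambda>q. if q = p then c else 0)"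

lemma basis_sv: "basis_vec p = sv 1 p"
  by (simp add: basis_vec_def sv_def)

lemma Mop_sv: "Mop g (sv c (x, m)) = sv (g x * c) (x, m)"
  by (auto simp: Mop_def sv_def fun_eq_iff)

lemma Ik_Suc: "Ik T (Suc l) x = Ik T l x * L0one T ((T ^^ Suc l) x)"
  by (simp add: Ik_def)

lemma Ik_Suc': "Ik T (Suc k) y = L0one T (T y) * Ik T k (T y)"
proof -
  have "Ik T (Suc k) y = L0one T ((T ^^ Suc 0) y) * (\<Prod>j<k. L0one T ((T ^^ Suc (Suc j)) y))"
    unfolding Ik_def by (rule prod.lessThan_Suc_shift)
  also have "(\<Prod>j<k. L0one T ((T ^^ Suc (Suc j)) y)) = Ik T k (T y)"
    unfolding Ik_def by (rule prod.cong) (simp_all add: funpow_swap1)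
  finally show ?thesis by simp
qed

lemma Ik_nonneg: "0 \<le> Ik T k x"
  by (simp add: Ik_def L0one_def prod_nonneg)

lemma Sstar_sv: "Sstar T (sv c (x, m)) = sv (c * complex_of_real (1 / sqrt (L0one T (T x)))) (T x, m - 1)"
proof (rule ext)
  fix p :: "'a \<times> int"
  obtain z j where p: "p = (z, j)" by force
  have s: "(\<Sum>y\<in>{y. T y = z}. sv c (x, m) (y, j + 1)) = (if T x = z \<and> j + 1 = m then c else 0)"
    if fin: "finite {y. T y = z}"
  proof -
    have "(\<Sum>y\<in>{y. T y = z}. sv c (x, m) (y, j + 1)) = (\<Sum>y\<in>{y. T y = z}. if y = x then (if j + 1 = m then c else 0) else 0)"
      by (rule sum.cong) (auto simp: sv_def)
    also have "\<dots> = (if T x = z \<and> j + 1 = m then c else 0)"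
      using fin by (simp add: sum.delta')
    finally show ?thesis .
  qed
  show "Sstar T (sv c (x, m)) p = sv (c * complex_of_real (1 / sqrt (L0one T (T x)))) (T x, m - 1) p"
  proof (cases "finite {y. T y = z}")
    case True
    then show ?thesis unfolding p Sstar_def using s[OF True] by (auto simp: sv_def)
  next
    case False
    hence "L0one T z = 0" by (simp add: L0one_def)
    then show ?thesis using False unfolding p Sstar_def by (auto simp: sv_def)
  qed
qed

lemma Sstar_pow_sv: "(Sstar T ^^ l) (sv c (x, m)) = sv (c * complex_of_real (1 / sqrt (Ik T l x))) ((T ^^ l) x, m - int l)"
proof (induction l arbitrary: c)
  case 0 then show ?case by (simp add: Ik_def)
next
  case (Suc l)
  have "(Sstar T ^^ Suc l) (sv c (x, m)) = Sstar T ((Sstar T ^^ l) (sv c (x, m)))" by simp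
  also have "\<dots> = sv (c * complex_of_real (1 / sqrt (Ik T l x)) * complex_of_real (1 / sqrt (L0one T (T ((T ^^ l) x)))))
        (T ((T ^^ l) x), m - int l - 1)" by (simp add: Suc Sstar_sv)
  also have "\<dots> = sv (c * complex_of_real (1 / sqrt (Ik T (Suc l) x))) ((T ^^ Suc l) x, m - int (Suc l))"
    by (simp add: Ik_Suc real_sqrt_mult algebra_simps)
  finally show ?case .
qed

lemma Sop_pow_sv: "(Sop T ^^ k) (sv c (z, j)) (y, n) =
   (if (T ^^ k) y = z \<and> n = j + int k then c * complex_of_real (1 / sqrt (Ik T k y)) else 0)"
proof (induction k arbitrary: y n)
  case 0 then show ?case by (simp add: Ik_def sv_def)
next
  case (Suc k)
  have "(Sop T ^^ Suc k) (sv c (z, j)) (y, n) = complex_of_real (1 / sqrt (L0one T (T y))) * (Sop T ^^ k) (sv c (z, j)) (T y, n - 1)"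
    by (simp add: Sop_def)
  also have "\<dots> = (if (T ^^ Suc k) y = z \<and> n = j + int (Suc k) then c * complex_of_real (1 / sqrt (Ik T (Suc k) y)) else 0)"
    by (simp add: Suc Ik_Suc' real_sqrt_mult funpow_swap1 algebra_simps)
  finally show ?case .
qed

lemma mono_coeff: "mon T (f, k, l, g) (basis_vec (x, m)) (y, n) =
   f y * (if (T ^^ k) y = (T ^^ l) x \<and> n = m - int l + int k
          then g x * complex_of_real (1 / sqrt (Ik T l x)) * complex_of_real (1 / sqrt (Ik T k y)) else 0)"
  unfolding mono_app basis_sv Mop_sv Sstar_pow_sv by (simp add: Sop_pow_sv Mop_def)

definition Gm :: "('a \<Rightarrow> 'a) \<Rightarrow> ('a \<Rightarrow> complex) \<times> nat \<times> nat \<times> ('a \<Rightarrow> complex) \<Rightarrow> 'a \<Rightarrow> complex" where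
  "Gm T m = (case m of (f, k, l, g) \<Rightarrow> (\<lambda>x. if k = l then f x * g x / complex_of_real (Ik T k x) else 0))"

lemma mono_diag: "mon T m (basis_vec (x, n)) (x, n) = Gm T m x"
proof -
  obtain f k l g where m: "m = (f, k, l, g)" by (cases m) auto
  have sq: "complex_of_real (1 / sqrt (Ik T k x)) * complex_of_real (1 / sqrt (Ik T k x)) = complex_of_real (1 / Ik T k x)"
    unfolding of_real_mult[symmetric] using Ik_nonneg[of T k x]
    by (simp add: real_sqrt_mult[symmetric])
  show ?thesis
  proof (cases "k = l")
    case True
    have "f x * (g x * complex_of_real (1 / sqrt (Ik T k x)) * complex_of_real (1 / sqrt (Ik T k x))) = f x * g x / complex_of_real (Ik T k x)"
      unfolding mult.assoc sq by (simp add: divide_inverse)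
    then show ?thesis using True unfolding m mono_coeff Gm_def by simp
  next
    case False
    then show ?thesis unfolding m mono_coeff Gm_def by simp
  qed
qed




lemma small_zero:
  fixes z :: complex
  assumes "\<And>e. e > 0 \<Longrightarrow> cmod z \<le> C * e"
  shows "z = 0"
proof (rule ccontr)
  assume z: "z \<noteq> 0"
  define e where "e = cmod z / (2 * (\<bar>C\<bar> + 1))"
  have e: "e > 0" using z by (simp add: e_def add_pos_nonneg)
  have "cmod z \<le> C * e" using assms[OF e] .
  also have "\<dots> \<le> \<bar>C\<bar> * e" using e by (simp add: mult_right_mono)
  also have "\<dots> < (\<bar>C\<bar> + 1) * e" using e by simp
  also have "\<dots> = cmod z / 2" unfolding e_def by (simp add: field_simps)
  finally show False using z by simp
qed

lemma alg0_crossed: "a \<in> alg0 T \<Longrightarrow> a \<in> crossed T"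
  unfolding crossed_def mem_Collect_eq
proof (intro allI impI)
  fix eps :: real assume "a \<in> alg0 T" "eps > 0"
  have "op_close a a eps"
    unfolding op_close_def using \<open>eps > 0\<close> by (auto simp: ell2_def l2norm_def intro!: mult_nonneg_nonneg infsum_nonneg)
  thus "\<exists>a'\<in>alg0 T. op_close a a' eps" using \<open>a \<in> alg0 T\<close> by blast
qed

lemma Sop_pow_alg0: "(Sop T ^^ k) \<in> alg0 T"
proof (induction k)
  case 0
  have "(Sop T ^^ 0) = Mop (\<lambda>_. 1)" by (simp add: fun_eq_iff Mop_def)
  then show ?case using alg0.mult[of "\<lambda>_. 1" T] by (simp only: continuous_on_const)
next
  case (Suc k)
  have e: "Sop T ^^ Suc k = Sop T \<circ> (Sop T ^^ k)" by simp
  show ?case unfolding e by (rule alg0.comp[OF alg0.S Suc])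
qed

lemma Sstar_pow_alg0: "(Sstar T ^^ k) \<in> alg0 T"
proof (induction k)
  case 0
  have "(Sstar T ^^ 0) = Mop (\<lambda>_. 1)" by (simp add: fun_eq_iff Mop_def)
  then show ?case using alg0.mult[of "\<lambda>_. 1" T] by (simp only: continuous_on_const)
next
  case (Suc k)
  have e: "Sstar T ^^ Suc k = Sstar T \<circ> (Sstar T ^^ k)" by simp
  show ?case unfolding e by (rule alg0.comp[OF alg0.Sstar Suc])
qed

lemma mono_alg0: "ok m \<Longrightarrow> mon T m \<in> alg0 T"
proof -
  assume "ok m"
  obtain f k l g where m: "m = (f, k, l, g)" by (cases m) auto
  have c: "continuous_on UNIV f" "continuous_on UNIV g" using \<open>ok m\<close> m by (auto simp: ok_def)
  show ?thesis unfolding m mon_def prod.case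
    by (intro alg0.comp alg0.mult c Sop_pow_alg0 Sstar_pow_alg0)
qed

lemma sumop_Nil: "sumop T [] = (\<lambda>v p. 0 * Sop T v p)"
  by (simp add: sumop_def)

lemma sumop_Cons: "sumop T (m # ms) = (\<lambda>v p. mon T m v p + sumop T ms v p)"
  by (simp add: sumop_def)

lemma sumop_alg0: "\<forall>m\<in>set ms. ok m \<Longrightarrow> sumop T ms \<in> alg0 T"
proof (induction ms)
  case Nil then show ?case unfolding sumop_Nil using alg0.scale[OF alg0.S, where c = 0] by simp
next
  case (Cons m ms)
  then show ?case unfolding sumop_Cons by (intro alg0.add mono_alg0) auto
qed

lemma G_add: "is_cond_exp T G \<Longrightarrow> a \<in> crossed T \<Longrightarrow> b \<in> crossed T \<Longrightarrow> G (\<lambda>v p. a v p + b v p) = (\<lambda>x. G a x + G b x)"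
  unfolding is_cond_exp_def by blast

lemma G_scale: "is_cond_exp T G \<Longrightarrow> a \<in> crossed T \<Longrightarrow> G (\<lambda>v p. c * a v p) = (\<lambda>x. c * G a x)"
  unfolding is_cond_exp_def by blast

lemma G_close: "is_cond_exp T G \<Longrightarrow> a \<in> crossed T \<Longrightarrow> b \<in> crossed T \<Longrightarrow> eps \<ge> 0 \<Longrightarrow> op_close a b eps \<Longrightarrow> cmod (G a x - G b x) \<le> eps"
  unfolding is_cond_exp_def by blast

lemma G_cont: "is_cond_exp T G \<Longrightarrow> b \<in> crossed T \<Longrightarrow> continuous_on UNIV (G b)"
  unfolding is_cond_exp_def by blast

lemma G_mono: "is_cond_exp T G \<Longrightarrow> ok m \<Longrightarrow> G (mon T m) = Gm T m"
proof -
  assume G: "is_cond_exp T G" and "ok m"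
  obtain f k l g where m: "m = (f, k, l, g)" by (cases m) auto
  have c: "continuous_on UNIV f" "continuous_on UNIV g" using \<open>ok m\<close> m by (auto simp: ok_def)
  have "G (Mop f \<circ> (Sop T ^^ k) \<circ> (Sstar T ^^ l) \<circ> Mop g) =
          (\<lambda>x. if k = l then f x * g x / complex_of_real (Ik T k x) else 0)"
    using G c unfolding is_cond_exp_def by blast
  thus ?thesis unfolding m mon_def Gm_def prod.case .
qed

lemma G_sumop: "is_cond_exp T G \<Longrightarrow> \<forall>m\<in>set ms. ok m \<Longrightarrow> G (sumop T ms) = (\<lambda>x. \<Sum>m\<leftarrow>ms. Gm T m x)"
proof (induction ms)
  case Nil
  have "G (\<lambda>v p. 0 * Sop T v p) = (\<lambda>x. 0 * G (Sop T) x)"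
    by (rule G_scale[OF Nil(1) alg0_crossed[OF alg0.S]])
  then show ?case unfolding sumop_Nil by simp
next
  case (Cons m ms)
  have "G (sumop T (m # ms)) = (\<lambda>x. G (mon T m) x + G (sumop T ms) x)"
    unfolding sumop_Cons using Cons(2,3)
    by (intro G_add[OF Cons(2)] alg0_crossed[OF mono_alg0] alg0_crossed[OF sumop_alg0]) auto
  moreover have "G (mon T m) = Gm T m" using G_mono[OF Cons(2)] Cons(3) by simp
  ultimately show ?case using Cons by simp
qed

lemma part1_alg0:
  fixes T :: "'a::t2_space \<Rightarrow> 'a"
  assumes "covering_map T" "is_cond_exp T G" "a \<in> alg0 T"
  shows "a (basis_vec (x, n)) (x, n) = G a x"
proof -
  obtain ms where ms: "\<forall>m\<in>set ms. ok m" "a = sumop T ms" using alg0_normal[OF assms(1,3)] by blast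
  show ?thesis unfolding ms(2) G_sumop[OF assms(2) ms(1)] by (simp add: sumop_def mono_diag)
qed

lemma part1:
  fixes T :: "'a::t2_space \<Rightarrow> 'a"
  assumes "covering_map T" "is_cond_exp T G" "b \<in> crossed T"
  shows "b (basis_vec (x, n)) (x, n) = G b x"
proof -
  have "cmod (b (basis_vec (x, n)) (x, n) - G b x) \<le> 2 * e" if e: "e > 0" for e
  proof -
    obtain a where a: "a \<in> alg0 T" "op_close b a e" using assms(3) e unfolding crossed_def by blast
    have 1: "cmod (b (basis_vec (x, n)) (x, n) - a (basis_vec (x, n)) (x, n)) \<le> e"
      using op_close_point[OF a(2) conjunct1[OF basis_ell2[of "(x, n)"]], of "(x, n)"] basis_ell2[of "(x, n)"] by simp
    have 2: "cmod (G b x - G a x) \<le> e"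
      using G_close[OF assms(2) assms(3) alg0_crossed[OF a(1)]] e a(2) by simp
    have 3: "a (basis_vec (x, n)) (x, n) = G a x" by (rule part1_alg0[OF assms(1,2) a(1)])
    have "cmod (b (basis_vec (x, n)) (x, n) - G b x) \<le>
          cmod (b (basis_vec (x, n)) (x, n) - a (basis_vec (x, n)) (x, n)) + cmod (G b x - G a x)"
      using norm_triangle_ineq4[of "b (basis_vec (x, n)) (x, n) - a (basis_vec (x, n)) (x, n)" "G b x - G a x"]
      by (simp add: 3)
    thus ?thesis using 1 2 by simp
  qed
  thus ?thesis using small_zero[of "b (basis_vec (x, n)) (x, n) - G b x" 2] by simp
qed




lemma lin_add: "lin a \<Longrightarrow> lin b \<Longrightarrow> lin (\<lambda>v p. a v p + b v p)"
  unfolding lin_def by (simp add: fun_eq_iff add_ac distrib_left)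

lemma lin_scale: "lin a \<Longrightarrow> lin (\<lambda>v p. c * a v p)"
  unfolding lin_def by (simp add: fun_eq_iff distrib_left mult.left_commute)

lemma lin_alg0: "a \<in> alg0 T \<Longrightarrow> lin a"
proof (induction rule: alg0.induct)
  case (mult f) show ?case by (rule lin_Mop)
next
  case S show ?case by (rule lin_Sop)
next
  case Sstar show ?case by (rule lin_Sstar)
next
  case (add a b) show ?case using add.IH by (rule lin_add)
next
  case (scale a c) show ?case using scale.IH by (rule lin_scale)
next
  case (comp a b) show ?case using comp.IH by (rule lin_comp)
qed

definition loc :: "'a op \<Rightarrow> bool" where
  "loc a \<longleftrightarrow> (\<forall>p. \<exists>F. finite F \<and> (\<forall>v w. (\<forall>q\<in>F. v q = w q) \<longrightarrow> a v p = a w p))"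

lemma loc_alg0: "a \<in> alg0 T \<Longrightarrow> loc a"
proof (induction rule: alg0.induct)
  case (mult f)
  show ?case unfolding loc_def
  proof
    fix p :: "'a \<times> int"
    show "\<exists>F. finite F \<and> (\<forall>v w. (\<forall>q\<in>F. v q = w q) \<longrightarrow> Mop f v p = Mop f w p)"
      by (rule exI[of _ "{p}"]) (simp add: Mop_def)
  qed
next
  case S
  show ?case unfolding loc_def
  proof
    fix p :: "'a \<times> int"
    show "\<exists>F. finite F \<and> (\<forall>v w. (\<forall>q\<in>F. v q = w q) \<longrightarrow> Sop T v p = Sop T w p)"
      by (rule exI[of _ "{(T (fst p), snd p - 1)}"]) (simp add: Sop_def)
  qed
next
  case Sstar
  show ?case unfolding loc_def
  proof
    fix p :: "'a \<times> int"
    show "\<exists>F. finite F \<and> (\<forall>v w. (\<forall>q\<in>F. v q = w q) \<longrightarrow> Sstar T v p = Sstar T w p)"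
    proof (cases "finite {y. T y = fst p}")
      case True
      show ?thesis
      proof (rule exI[of _ "(\<lambda>y. (y, snd p + 1)) ` {y. T y = fst p}"], intro conjI allI impI)
        show "finite ((\<lambda>y. (y, snd p + 1)) ` {y. T y = fst p})" using True by simp
        fix v w :: "'a \<times> int \<Rightarrow> complex"
        assume "\<forall>q\<in>(\<lambda>y. (y, snd p + 1)) ` {y. T y = fst p}. v q = w q"
        hence "\<forall>y\<in>{y. T y = fst p}. v (y, snd p + 1) = w (y, snd p + 1)" by blast
        hence "(\<Sum>y\<in>{y. T y = fst p}. v (y, snd p + 1)) = (\<Sum>y\<in>{y. T y = fst p}. w (y, snd p + 1))"
          by (intro sum.cong refl) blast
        thus "Sstar T v p = Sstar T w p" unfolding Sstar_def by simp
      qed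
    next
      case False
      show ?thesis by (rule exI[of _ "{}"]) (simp add: Sstar_def False)
    qed
  qed
next
  case (add a b)
  show ?case unfolding loc_def
  proof
    fix p :: "'a \<times> int"
    obtain F1 where F1: "finite F1" "\<forall>v w. (\<forall>q\<in>F1. v q = w q) \<longrightarrow> a v p = a w p"
      using add(3) unfolding loc_def by blast
    obtain F2 where F2: "finite F2" "\<forall>v w. (\<forall>q\<in>F2. v q = w q) \<longrightarrow> b v p = b w p"
      using add(4) unfolding loc_def by blast
    show "\<exists>F. finite F \<and> (\<forall>v w. (\<forall>q\<in>F. v q = w q) \<longrightarrow> a v p + b v p = a w p + b w p)"
    proof (rule exI[of _ "F1 \<union> F2"], intro conjI allI impI)
      show "finite (F1 \<union> F2)" using F1 F2 by simp
      fix v w :: "'a \<times> int \<Rightarrow> complex" assume h: "\<forall>q\<in>F1 \<union> F2. v q = w q"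
      have "a v p = a w p" using F1(2) h by blast
      moreover have "b v p = b w p" using F2(2) h by blast
      ultimately show "a v p + b v p = a w p + b w p" by simp
    qed
  qed
next
  case (scale a c)
  show ?case unfolding loc_def
  proof
    fix p :: "'a \<times> int"
    obtain F1 where F1: "finite F1" "\<forall>v w. (\<forall>q\<in>F1. v q = w q) \<longrightarrow> a v p = a w p"
      using scale(2) unfolding loc_def by blast
    show "\<exists>F. finite F \<and> (\<forall>v w. (\<forall>q\<in>F. v q = w q) \<longrightarrow> c * a v p = c * a w p)"
    proof (rule exI[of _ F1], intro conjI allI impI)
      show "finite F1" using F1 by simp
      fix v w :: "'a \<times> int \<Rightarrow> complex" assume h: "\<forall>q\<in>F1. v q = w q"
      have "a v p = a w p" using F1(2) h by blast
      thus "c * a v p = c * a w p" by simp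
    qed
  qed
next
  case (comp a b)
  show ?case unfolding loc_def
  proof
    fix p :: "'a \<times> int"
    obtain F1 where F1: "finite F1" "\<forall>v w. (\<forall>q\<in>F1. v q = w q) \<longrightarrow> a v p = a w p"
      using comp(3) unfolding loc_def by blast
    have "\<forall>q. \<exists>F. finite F \<and> (\<forall>v w. (\<forall>r\<in>F. v r = w r) \<longrightarrow> b v q = b w q)"
      using comp(4) unfolding loc_def by blast
    then obtain Fb where Fb: "\<forall>q. finite (Fb q) \<and> (\<forall>v w. (\<forall>r\<in>Fb q. v r = w r) \<longrightarrow> b v q = b w q)"
      by metis
    show "\<exists>F. finite F \<and> (\<forall>v w. (\<forall>q\<in>F. v q = w q) \<longrightarrow> (a \<circ> b) v p = (a \<circ> b) w p)"
    proof (rule exI[of _ "\<Union>q\<in>F1. Fb q"], intro conjI allI impI)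
      show "finite (\<Union>q\<in>F1. Fb q)" by (rule finite_UN_I[OF F1(1)]) (use Fb in blast)
      fix v w :: "'a \<times> int \<Rightarrow> complex"
      assume vw: "\<forall>q\<in>\<Union>q\<in>F1. Fb q. v q = w q"
      have "\<forall>q\<in>F1. b v q = b w q" using vw Fb by blast
      thus "(a \<circ> b) v p = (a \<circ> b) w p" using F1(2) by simp
    qed
  qed
qed

definition restr :: "('a \<times> int) set \<Rightarrow> ('a \<times> int \<Rightarrow> complex) \<Rightarrow> ('a \<times> int \<Rightarrow> complex)" where
  "restr S v = (\<lambda>q. if q \<in> S then v q else 0)"

lemma restr_expand: "finite S \<Longrightarrow> restr S v = (\<lambda>r. \<Sum>q\<in>S. v q * basis_vec q r)"
proof (rule ext)
  fix r assume "finite S"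
  have "(\<Sum>q\<in>S. v q * basis_vec q r) = (\<Sum>q\<in>S. if r = q then v q else 0)"
    by (rule sum.cong) (auto simp: basis_vec_def)
  also have "\<dots> = restr S v r" using \<open>finite S\<close> by (simp add: restr_def)
  finally show "restr S v r = (\<Sum>q\<in>S. v q * basis_vec q r)" by simp
qed

lemma lin_finsum: assumes "lin a" "finite S" shows "a (\<lambda>r. \<Sum>q\<in>S. h q r) p = (\<Sum>q\<in>S. a (h q) p)"
  using assms(2)
proof (induction S rule: finite_induct)
  case empty then show ?case by (simp add: lin_zero[OF assms(1)])
next
  case (insert x S)
  have "a (\<lambda>r. \<Sum>q\<in>insert x S. h q r) = a (\<lambda>r. h x r + (\<Sum>q\<in>S. h q r))"
    using insert(1,2) by simp
  also have "\<dots> = (\<lambda>r. a (h x) r + a (\<lambda>r. \<Sum>q\<in>S. h q r) r)" using spec[OF spec[OF conjunct1[OF assms(1)[unfolded lin_def]], of "h x"], of "\<lambda>r. \<Sum>q\<in>S. h q r"] by simp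
  finally show ?case using insert by simp
qed

lemma lin_restr: "lin a \<Longrightarrow> finite S \<Longrightarrow> a (restr S v) p = (\<Sum>q\<in>S. v q * a (basis_vec q) p)"
proof -
  assume a: "lin a" and S: "finite S"
  have "a (restr S v) p = (\<Sum>q\<in>S. a (\<lambda>r. v q * basis_vec q r) p)"
    unfolding restr_expand[OF S] by (rule lin_finsum[OF a S])
  also have "\<dots> = (\<Sum>q\<in>S. v q * a (basis_vec q) p)"
    using a unfolding lin_def by simp
  finally show ?thesis .
qed

lemma crossed_restr:
  assumes "b \<in> crossed T" "finite S" "v \<in> ell2"
  shows "b (restr S v) p = (\<Sum>q\<in>S. v q * b (basis_vec q) p)"
proof -
  have vS: "restr S v \<in> ell2" using ell2_restrict[OF assms(3)] unfolding restr_def by blast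
  define C where "C = l2norm (restr S v) + (\<Sum>q\<in>S. cmod (v q))"
  have "cmod (b (restr S v) p - (\<Sum>q\<in>S. v q * b (basis_vec q) p)) \<le> C * e" if e: "e > 0" for e
  proof -
    obtain a where a: "a \<in> alg0 T" "op_close b a e" using assms(1) e unfolding crossed_def by blast
    have 1: "cmod (b (restr S v) p - a (restr S v) p) \<le> e * l2norm (restr S v)"
      by (rule op_close_point[OF a(2) vS])
    have ae: "cmod (b (basis_vec q) p - a (basis_vec q) p) \<le> e" for q
      using op_close_point[OF a(2) conjunct1[OF basis_ell2[of q]], of p] basis_ell2[of q] by simp
    have 2: "a (restr S v) p = (\<Sum>q\<in>S. v q * a (basis_vec q) p)"
      by (rule lin_restr[OF lin_alg0[OF a(1)] assms(2)])
    have "cmod ((\<Sum>q\<in>S. v q * a (basis_vec q) p) - (\<Sum>q\<in>S. v q * b (basis_vec q) p))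
        = cmod (\<Sum>q\<in>S. v q * (a (basis_vec q) p - b (basis_vec q) p))"
      by (simp add: sum_subtractf right_diff_distrib)
    also have "\<dots> \<le> (\<Sum>q\<in>S. cmod (v q * (a (basis_vec q) p - b (basis_vec q) p)))"
      by (rule norm_sum)
    also have "\<dots> \<le> (\<Sum>q\<in>S. cmod (v q) * e)"
    proof (rule sum_mono)
      fix q
      have "cmod (a (basis_vec q) p - b (basis_vec q) p) \<le> e" using ae[of q] by (simp add: norm_minus_commute)
      thus "cmod (v q * (a (basis_vec q) p - b (basis_vec q) p)) \<le> cmod (v q) * e"
        by (simp add: norm_mult mult_left_mono)
    qed
    finally have 3: "cmod (a (restr S v) p - (\<Sum>q\<in>S. v q * b (basis_vec q) p)) \<le> (\<Sum>q\<in>S. cmod (v q)) * e"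
      unfolding 2 by (simp add: sum_distrib_right)
    have "cmod (b (restr S v) p - (\<Sum>q\<in>S. v q * b (basis_vec q) p))
        \<le> cmod (b (restr S v) p - a (restr S v) p) + cmod (a (restr S v) p - (\<Sum>q\<in>S. v q * b (basis_vec q) p))"
      using norm_triangle_ineq[of "b (restr S v) p - a (restr S v) p" "a (restr S v) p - (\<Sum>q\<in>S. v q * b (basis_vec q) p)"]
      by simp
    also have "\<dots> \<le> C * e" using 1 3 unfolding C_def by (simp add: algebra_simps)
    finally show ?thesis .
  qed
  hence "b (restr S v) p - (\<Sum>q\<in>S. v q * b (basis_vec q) p) = 0" by (rule small_zero)
  thus ?thesis by simp
qed

lemma part2_back:
  fixes T :: "'a::t2_space \<Rightarrow> 'a"
  assumes T: "covering_map T" and G: "is_cond_exp T G" and b: "b \<in> crossed T"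
    and off: "\<forall>q p. q \<noteq> p \<longrightarrow> b (basis_vec q) p = 0"
    and v: "v \<in> ell2"
  shows "b v = Mop (G b) v"
proof (rule ext)
  fix p :: "'a \<times> int"
  have "cmod (b v p - G b (fst p) * v p) \<le> (2 * l2norm v) * e" if e: "e > 0" for e
  proof -
    obtain a where a: "a \<in> alg0 T" "op_close b a e" using b e unfolding crossed_def by blast
    obtain F where F: "finite F" "\<forall>v w. (\<forall>q\<in>F. v q = w q) \<longrightarrow> a v p = a w p"
      using loc_alg0[OF a(1)] unfolding loc_def by blast
    define S where "S = insert p F"
    have S: "finite S" "p \<in> S" using F(1) by (auto simp: S_def)
    have vS: "restr S v \<in> ell2" "l2norm (restr S v) \<le> l2norm v"
      using ell2_restrict[OF v] unfolding restr_def by blast+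
    have "\<forall>q\<in>F. v q = restr S v q" by (simp add: restr_def S_def)
    hence av: "a v p = a (restr S v) p" using F(2) by blast
    have 1: "cmod (b v p - a v p) \<le> e * l2norm v" by (rule op_close_point[OF a(2) v])
    have "cmod (b (restr S v) p - a (restr S v) p) \<le> e * l2norm (restr S v)"
      by (rule op_close_point[OF a(2) vS(1)])
    also have "\<dots> \<le> e * l2norm v" using mult_left_mono[OF vS(2), of e] e by simp
    finally have 2: "cmod (a (restr S v) p - b (restr S v) p) \<le> e * l2norm v" by (simp add: norm_minus_commute)
    have "b (restr S v) p = (\<Sum>q\<in>S. v q * b (basis_vec q) p)" by (rule crossed_restr[OF b S(1) v])
    also have "\<dots> = (\<Sum>q\<in>S. if q = p then v p * b (basis_vec p) p else 0)"
    proof (rule sum.cong[OF refl])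
      fix q assume "q \<in> S"
      show "v q * b (basis_vec q) p = (if q = p then v p * b (basis_vec p) p else 0)"
        using off[rule_format, of q p] by auto
    qed
    also have "\<dots> = v p * b (basis_vec p) p" using S by simp
    also have "b (basis_vec p) p = G b (fst p)"
      using part1[OF T G b, of "fst p" "snd p"] by simp
    finally have 3: "b (restr S v) p = G b (fst p) * v p" by simp
    have eq: "b v p - G b (fst p) * v p = (b v p - a v p) + (a (restr S v) p - b (restr S v) p)"
      by (simp add: av 3)
    have "cmod (b v p - G b (fst p) * v p) \<le> cmod (b v p - a v p) + cmod (a (restr S v) p - b (restr S v) p)"
      unfolding eq by (rule norm_triangle_ineq)
    also have "\<dots> \<le> (2 * l2norm v) * e" using 1 2 by (simp add: algebra_simps)
    finally show ?thesis .
  qed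
  hence "b v p - G b (fst p) * v p = 0" by (rule small_zero)
  thus "b v p = Mop (G b) v p" by (simp add: Mop_def)
qed

lemma part2:
  fixes T :: "'a::t2_space \<Rightarrow> 'a"
  assumes T: "covering_map T" and G: "is_cond_exp T G" and b: "b \<in> crossed T"
  shows "(\<exists>f. continuous_on UNIV f \<and> (\<forall>v\<in>ell2. b v = Mop f v)) \<longleftrightarrow>
         (\<forall>x m y n. (x, m) \<noteq> (y, n) \<longrightarrow> b (basis_vec (x, m)) (y, n) = 0)"
proof
  assume "\<exists>f. continuous_on UNIV f \<and> (\<forall>v\<in>ell2. b v = Mop f v)"
  then obtain f where f: "\<forall>v\<in>ell2. b v = Mop f v" by blast
  show "\<forall>x m y n. (x, m) \<noteq> (y, n) \<longrightarrow> b (basis_vec (x, m)) (y, n) = 0"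
  proof (intro allI impI)
    fix x m y n assume ne: "(x, m) \<noteq> ((y::'a), (n::int))"
    have "b (basis_vec (x, m)) = Mop f (basis_vec (x, m))" using f basis_ell2 by blast
    thus "b (basis_vec (x, m)) (y, n) = 0" using ne by (auto simp: Mop_def basis_vec_def)
  qed
next
  assume off: "\<forall>x m y n. (x, m) \<noteq> (y, n) \<longrightarrow> b (basis_vec (x, m)) (y, n) = 0"
  have off': "\<forall>q p. q \<noteq> p \<longrightarrow> b (basis_vec q) p = 0" using off by auto
  show "\<exists>f. continuous_on UNIV f \<and> (\<forall>v\<in>ell2. b v = Mop f v)"
    using part2_back[OF T G b off'] G_cont[OF G b] by blast
qed




lemma sum_list_map_nth: "(\<Sum>x\<leftarrow>xs. f x) = (\<Sum>i<length xs. f (xs ! i))"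
  by (induction xs) (simp_all del: sum.lessThan_Suc add: sum.lessThan_Suc_shift)

lemma cmod_close1: "cmod (u - w) \<le> e \<Longrightarrow> cmod w \<le> cmod u + e"
  using norm_triangle_ineq4[of u "u - w"] by simp

lemma cmod_close2: "cmod (u - w) \<le> e \<Longrightarrow> cmod u \<le> cmod w + e"
  using norm_triangle_ineq4[of w "w - u"] by (simp add: norm_minus_commute)

lemma cont_snd: "continuous_on UNIV f \<Longrightarrow> continuous_on UNIV (\<lambda>z. f (snd z))"
  by (rule continuous_on_compose2[of UNIV f]) (auto intro: continuous_intros)

lemma cont_fst: "continuous_on UNIV f \<Longrightarrow> continuous_on UNIV (\<lambda>z. f (fst z))"
  by (rule continuous_on_compose2[of UNIV f]) (auto intro: continuous_intros)

lemma part3: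
  fixes T :: "'a::t2_space \<Rightarrow> 'a"
  assumes T: "covering_map T" and b: "b \<in> crossed T" and nz: "b (basis_vec (x, m)) (y, n) \<noteq> 0"
  shows "\<exists>k l. int k + m = int l + n \<and> (T ^^ l) x = (T ^^ k) y \<and>
            (\<exists>U V. open U \<and> x \<in> U \<and> open V \<and> y \<in> V \<and>
               (\<forall>x'\<in>U. \<forall>y'\<in>V. (T ^^ l) x' = (T ^^ k) y' \<longrightarrow>
                  b (basis_vec (x', m)) (y', n) \<noteq> 0))"
proof -
  define c where "c = b (basis_vec (x, m)) (y, n)"
  define eps where "eps = cmod c / 4"
  have eps: "eps > 0" using nz by (simp add: c_def eps_def)
  obtain a where a: "a \<in> alg0 T" "op_close b a eps" using b eps unfolding crossed_def by blast
  obtain ms where ms: "\<forall>mm\<in>set ms. ok mm" "a = sumop T ms" using alg0_normal[OF T a(1)] by blast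
  have close: "cmod (b (basis_vec (x', m)) (y', n) - a (basis_vec (x', m)) (y', n)) \<le> eps" for x' y'
    using op_close_point[OF a(2) conjunct1[OF basis_ell2[of "(x', m)"]], of "(y', n)"] basis_ell2[of "(x', m)"]
    by simp
  define N where "N = length ms"
  define Ff where "Ff i = fst (ms ! i)" for i
  define K where "K i = fst (snd (ms ! i))" for i
  define L where "L i = fst (snd (snd (ms ! i)))" for i
  define Gg where "Gg i = snd (snd (snd (ms ! i)))" for i
  define al where "al k z = complex_of_real (1 / sqrt (Ik T k z))" for k z
  define co where "co i x' y' = Ff i y' * (if (T ^^ K i) y' = (T ^^ L i) x' \<and> n = m - int (L i) + int (K i)
      then Gg i x' * al (L i) x' * al (K i) y' else 0)" for i x' y'
  have msi: "ms ! i = (Ff i, K i, L i, Gg i)" for i by (simp add: Ff_def K_def L_def Gg_def)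
  have cont: "continuous_on UNIV (Ff i) \<and> continuous_on UNIV (Gg i)" if "i < N" for i
    using ms(1) nth_mem[OF that[unfolded N_def]] unfolding ok_def Ff_def Gg_def by auto
  have cal: "continuous_on UNIV (al k)" for k
    unfolding al_def by (rule lc_cont[OF lc_Ik[OF T]])
  have acoef: "a (basis_vec (x', m)) (y', n) = (\<Sum>i<N. co i x' y')" for x' y'
  proof -
    have "a (basis_vec (x', m)) (y', n) = (\<Sum>mm\<leftarrow>ms. mon T mm (basis_vec (x', m)) (y', n))"
      by (simp add: ms(2) sumop_def)
    also have "\<dots> = (\<Sum>i<N. mon T (ms ! i) (basis_vec (x', m)) (y', n))"
      unfolding N_def by (rule sum_list_map_nth)
    also have "\<dots> = (\<Sum>i<N. co i x' y')"
      unfolding msi mono_coeff co_def al_def by simp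
    finally show ?thesis .
  qed
  define D where "D = {i. i < N \<and> n = m - int (L i) + int (K i)}"
  define S0 where "S0 = {i \<in> D. (T ^^ K i) y = (T ^^ L i) x}"
  have "cmod c \<le> cmod (a (basis_vec (x, m)) (y, n)) + eps"
    using cmod_close2[OF close[of x y]] by (simp add: c_def)
  hence aco: "3 * eps \<le> cmod (\<Sum>i<N. co i x y)" unfolding acoef eps_def by simp
  have S0ne: "S0 \<noteq> {}"
  proof
    assume "S0 = {}"
    hence "co i x y = 0" if "i < N" for i using that by (auto simp: co_def S0_def D_def)
    hence "(\<Sum>i<N. co i x y) = 0" by simp
    thus False using aco eps by simp
  qed
  have finS0: "finite S0" by (rule finite_subset[of _ "{..<N}"]) (auto simp: S0_def D_def)
  define k0 where "k0 = Min (K ` S0)"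
  have "k0 \<in> K ` S0" unfolding k0_def using finS0 S0ne by (intro Min_in) auto
  then obtain i0 where i0: "i0 \<in> S0" "K i0 = k0" by blast
  have kmin: "k0 \<le> K i" if "i \<in> S0" for i unfolding k0_def using finS0 that by (intro Min_le) auto
  define l0 where "l0 = L i0"
  have rel0: "(T ^^ l0) x = (T ^^ k0) y" using i0 by (simp add: S0_def l0_def)
  have eq0: "int k0 + m = int l0 + n" using i0 by (simp add: S0_def D_def l0_def)
  define D1 where "D1 = {i \<in> D. k0 \<le> K i}"
  define D2 where "D2 = {i \<in> D. K i < k0}"
  have finD2: "finite D2" by (rule finite_subset[of _ "{..<N}"]) (auto simp: D2_def D_def)
  have finD1: "finite D1" by (rule finite_subset[of _ "{..<N}"]) (auto simp: D1_def D_def)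
  have contT: "continuous_on UNIV (T ^^ j)" for j by (rule cont_funpow[OF cov_cont[OF T]])
  have sep: "\<exists>P. open (fst P) \<and> open (snd P) \<and> x \<in> fst P \<and> y \<in> snd P \<and>
       (\<forall>x'\<in>fst P. \<forall>y'\<in>snd P. (T ^^ L i) x' \<noteq> (T ^^ K i) y')" if i: "i \<in> D2" for i
  proof -
    have "i \<notin> S0" using kmin i by (force simp: D2_def)
    hence ne: "(T ^^ L i) x \<noteq> (T ^^ K i) y" using i by (auto simp: S0_def D2_def)
    obtain U1 V1 where UV: "open U1" "open V1" "(T ^^ L i) x \<in> U1" "(T ^^ K i) y \<in> V1" "U1 \<inter> V1 = {}"
      using hausdorff[OF ne] by blast
    have "open ((T ^^ L i) -` U1)" "open ((T ^^ K i) -` V1)"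
      using open_vimage_UNIV[OF UV(1) contT] open_vimage_UNIV[OF UV(2) contT] by auto
    moreover have "\<forall>x'\<in>(T ^^ L i) -` U1. \<forall>y'\<in>(T ^^ K i) -` V1. (T ^^ L i) x' \<noteq> (T ^^ K i) y'"
      using UV(5) by auto
    ultimately show ?thesis using UV(3,4)
      by (intro exI[of _ "((T ^^ L i) -` U1, (T ^^ K i) -` V1)"]) simp
  qed
  obtain P where P: "\<forall>i\<in>D2. open (fst (P i)) \<and> open (snd (P i)) \<and> x \<in> fst (P i) \<and> y \<in> snd (P i) \<and>
       (\<forall>x'\<in>fst (P i). \<forall>y'\<in>snd (P i). (T ^^ L i) x' \<noteq> (T ^^ K i) y')"
  proof -
    have "\<forall>i\<in>D2. \<exists>P. open (fst P) \<and> open (snd P) \<and> x \<in> fst P \<and> y \<in> snd P \<and>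
       (\<forall>x'\<in>fst P. \<forall>y'\<in>snd P. (T ^^ L i) x' \<noteq> (T ^^ K i) y')" using sep by blast
    from bchoice[OF this] show thesis using that by blast
  qed
  define U2 where "U2 = (\<Inter>i\<in>D2. fst (P i))"
  define V2 where "V2 = (\<Inter>i\<in>D2. snd (P i))"
  have U2: "open U2" "x \<in> U2" unfolding U2_def using P finD2 by auto
  have V2: "open V2" "y \<in> V2" unfolding V2_def using P finD2 by auto
  have D1rel: "(T ^^ L i) x' = (T ^^ K i) y'" if i: "i \<in> D1" and r: "(T ^^ l0) x' = (T ^^ k0) y'" for i x' y'
  proof -
    have "n = m - int (L i) + int (K i)" "k0 \<le> K i" using i by (auto simp: D1_def D_def)
    hence Li: "L i = (K i - k0) + l0" using eq0 by linarith
    have Ki: "K i = (K i - k0) + k0" using \<open>k0 \<le> K i\<close> by simp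
    have "(T ^^ L i) x' = (T ^^ (K i - k0)) ((T ^^ l0) x')" unfolding Li funpow_add by simp
    also have "\<dots> = (T ^^ (K i - k0)) ((T ^^ k0) y')" using r by simp
    also have "\<dots> = (T ^^ K i) y'" by (subst (2) Ki) (simp only: funpow_add comp_apply)
    finally show ?thesis .
  qed
  define h where "h z = (\<Sum>i\<in>D1. Ff i (snd z) * (Gg i (fst z) * al (L i) (fst z) * al (K i) (snd z)))"
    for z :: "'a \<times> 'a"
  have key: "a (basis_vec (x', m)) (y', n) = h (x', y')"
    if x': "x' \<in> U2" and y': "y' \<in> V2" and r: "(T ^^ l0) x' = (T ^^ k0) y'" for x' y'
  proof -
    have "(\<Sum>i<N. co i x' y') = (\<Sum>i<N. if i \<in> D1 then Ff i y' * (Gg i x' * al (L i) x' * al (K i) y') else 0)"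
    proof (rule sum.cong[OF refl])
      fix i assume iN: "i \<in> {..<N}"
      show "co i x' y' = (if i \<in> D1 then Ff i y' * (Gg i x' * al (L i) x' * al (K i) y') else 0)"
      proof (cases "i \<in> D1")
        case True
        have "(T ^^ K i) y' = (T ^^ L i) x'" using D1rel[OF True r] by simp
        moreover have "n = m - int (L i) + int (K i)" using True by (simp add: D1_def D_def)
        ultimately show ?thesis using True by (simp add: co_def mult.assoc)
      next
        case False
        show ?thesis
        proof (cases "i \<in> D2")
          case True
          have "(T ^^ L i) x' \<noteq> (T ^^ K i) y'"
            using P True x' y' unfolding U2_def V2_def by blast
          then show ?thesis using False by (auto simp: co_def)
        next
          case False2: False
          have "i \<notin> D" using False False2 by (auto simp: D1_def D2_def)
          then show ?thesis using iN False by (auto simp: co_def D_def)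
        qed
      qed
    qed
    also have "\<dots> = (\<Sum>i\<in>{..<N} \<inter> D1. Ff i y' * (Gg i x' * al (L i) x' * al (K i) y'))"
      by (rule sum.inter_restrict[symmetric]) simp
    also have "{..<N} \<inter> D1 = D1" by (auto simp: D1_def D_def)
    finally show ?thesis unfolding acoef h_def by simp
  qed
  have hcont: "continuous_on UNIV h"
    unfolding h_def
  proof (intro continuous_on_sum continuous_on_mult)
    fix i assume "i \<in> D1"
    hence iN: "i < N" by (simp add: D1_def D_def)
    show "continuous_on UNIV (\<lambda>z. Ff i (snd z))" by (rule cont_snd) (use cont[OF iN] in blast)
    show "continuous_on UNIV (\<lambda>z. Gg i (fst z))" by (rule cont_fst) (use cont[OF iN] in blast)
    show "continuous_on UNIV (\<lambda>z. al (L i) (fst z))" by (rule cont_fst[OF cal])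
    show "continuous_on UNIV (\<lambda>z. al (K i) (snd z))" by (rule cont_snd[OF cal])
  qed
  have hxy: "3 * eps \<le> cmod (h (x, y))"
    using aco key[OF U2(2) V2(2) rel0] acoef[of x y] by simp
  define Oo where "Oo = (\<lambda>z. cmod (h z)) -` {2 * eps <..}"
  have "continuous_on UNIV (\<lambda>z. cmod (h z))" using hcont by (intro continuous_intros)
  hence "open Oo" unfolding Oo_def by (rule open_vimage_UNIV[OF open_greaterThan])
  moreover have "(x, y) \<in> Oo" using hxy eps by (simp add: Oo_def)
  ultimately obtain A B where AB: "open A" "open B" "(x, y) \<in> A \<times> B" "A \<times> B \<subseteq> Oo"
    by (rule open_prod_elim)
  have fin: "b (basis_vec (x', m)) (y', n) \<noteq> 0"
    if x': "x' \<in> A \<inter> U2" and y': "y' \<in> B \<inter> V2" and r: "(T ^^ l0) x' = (T ^^ k0) y'" for x' y'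
  proof
    assume z: "b (basis_vec (x', m)) (y', n) = 0"
    have "(x', y') \<in> Oo" using AB(4) x' y' by blast
    hence "2 * eps < cmod (h (x', y'))" by (simp add: Oo_def)
    also have "\<dots> = cmod (a (basis_vec (x', m)) (y', n))" using key[of x' y'] x' y' r by simp
    also have "\<dots> \<le> cmod (b (basis_vec (x', m)) (y', n)) + eps" by (rule cmod_close1[OF close])
    finally show False using z eps by simp
  qed
  show ?thesis
    apply (rule exI[of _ k0], rule exI[of _ l0])
    apply (intro conjI eq0 rel0)
    apply (rule exI[of _ "A \<inter> U2"], rule exI[of _ "B \<inter> V2"])
    using AB U2 V2 fin by auto
qed



theorem lemma3p3:
  fixes T :: "'a::t2_space \<Rightarrow> 'a"
    and G :: "'a op \<Rightarrow> 'a \<Rightarrow> complex"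
    and b :: "'a op"
  assumes "compact (UNIV :: 'a set)"
    and "covering_map T"
    and "is_cond_exp T G"
    and "b \<in> crossed T"
  shows "(\<forall>x n. b (basis_vec (x, n)) (x, n) = G b x)
    \<and> ((\<exists>f. continuous_on UNIV f \<and> (\<forall>v\<in>ell2. b v = Mop f v)) \<longleftrightarrow>
         (\<forall>x m y n. (x, m) \<noteq> (y, n) \<longrightarrow> b (basis_vec (x, m)) (y, n) = 0))
    \<and> (\<forall>x m y n. b (basis_vec (x, m)) (y, n) \<noteq> 0 \<longrightarrow>
         (\<exists>k l. int k + m = int l + n \<and> (T ^^ l) x = (T ^^ k) y \<and>
            (\<exists>U V. open U \<and> x \<in> U \<and> open V \<and> y \<in> V \<and>
               (\<forall>x'\<in>U. \<forall>y'\<in>V. (T ^^ l) x' = (T ^^ k) y' \<longrightarrow>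
                  b (basis_vec (x', m)) (y', n) \<noteq> 0))))"
proof (intro conjI allI impI)
  fix x n
  show "b (basis_vec (x, n)) (x, n) = G b x" by (rule part1[OF assms(2,3,4)])
next
  show "(\<exists>f. continuous_on UNIV f \<and> (\<forall>v\<in>ell2. b v = Mop f v)) \<longleftrightarrow>
         (\<forall>x m y n. (x, m) \<noteq> (y, n) \<longrightarrow> b (basis_vec (x, m)) (y, n) = 0)"
    by (rule part2[OF assms(2,3,4)])
next
  fix x m y n
  assume "b (basis_vec (x, m)) (y, n) \<noteq> 0"
  thus "\<exists>k l. int k + m = int l + n \<and> (T ^^ l) x = (T ^^ k) y \<and>
            (\<exists>U V. open U \<and> x \<in> U \<and> open V \<and> y \<in> V \<and>
               (\<forall>x'\<in>U. \<forall>y'\<in>V. (T ^^ l) x' = (T ^^ k) y' \<longrightarrow>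
                  b (basis_vec (x', m)) (y', n) \<noteq> 0))"
    by (rule part3[OF assms(2,4)])
qed

end
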